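(* The twi-distance $\delta^*:\mathcal{T}^*\times\mathcal{T}^*\to\mathbb{R}_{\ge0}$, $\delta^*([x],[y])=\inf_{x'\in[x]}\inf_{y'\in[y]}\delta(x',y')$, is well defined and is a semi-metric on $\mathcal{T}^*$, and it satisfies $\delta^*([x],[y])=\delta(x^*,y^* )$ for all $x,y\in\mathcal{T}$, where $x^*,y^*$ are the condensed forms of $x,y$.
   Context: A time series of length $n\ge1$ is a finite real sequence; $\mathcal{T}$ is the set of all time series of finite length. For $m,n\in\mathbb{N}$, a warping path of order $m\times n$ is a sequence $p=(p_1,\dots,p_\ell)$ of points in $[m]\times[n]$ ($[n]=\{1,\dots,n\}$) with $p_1=(1,1)$, $p_\ell=(m,n)$, $p_{l+1}-p_l\in\{(1,0),(0,1),(1,1)\}$; $\mathcal{P}_{m,n}$ is the set of these. The dtw-distance of $x$ (length $m$) and $y$ (length $n$) is $\delta(x,y)=\min_{p\in\mathcal{P}_{m,n}}\big(\sum_{(i,j)\in p}(x_i-y_j)^2\big)^{1/2}$. Warping identification is the relation $x\sim y\iff\delta(x,y)=0$, which is an equivalence relation; $[x]=\{y\in\mathcal{T}:x\sim y\}$ and $\mathcal{T}^*=\{[x]:x\in\mathcal{T}\}$ is the quotient set. A time series $x'$ is an expansion of $x=(x_1,\dots,x_n)$, written $x'\succ x$, if there are integers $\alpha_i\ge1$ with $x'=(x_1^{(\alpha_1)},\dots,x_n^{(\alpha_n)})$, where $x_i^{(\alpha_i)}$ denotes $\alpha_i$ consecutive copies of $x_i$. A time series is irreducible if no two consecutive elements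 are equal. The condensed form $x^*$ of $x$ is the unique irreducible time series with $x\succ x^*$ (obtained by collapsing maximal runs of equal consecutive values). A semi-metric on a set $X$ is a function $d:X\times X\to\mathbb{R}$ with $d\ge0$, $d(a,b)=0\iff a=b$, and $d(a,b)=d(b,a)$. *)

theory Defs
  imports Complex_Main
begin

text \<open>Time series: nonempty finite real sequences, represented as lists; index i (1-based)
  of x is x ! (i - 1).\<close>

definition TS :: "real list set" where
  "TS = {x. x \<noteq> []}"

definition is_warping_path :: "nat \<Rightarrow> nat \<Rightarrow> (nat \<times> nat) list \<Rightarrow> bool" where
  "is_warping_path m n p \<longleftrightarrow>
     p \<noteq> [] \<and> hd p = (1, 1) \<and> last p = (m, n) \<and>
     (\<forall>q\<in>set p. fst q \<in> {1..m} \<and> snd q \<in> {1..n}) \<and>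
     (\<forall>k. Suc k < length p \<longrightarrow>
        p ! Suc k \<in> {(fst (p ! k) + 1, snd (p ! k)),
                      (fst (p ! k), snd (p ! k) + 1),
                      (fst (p ! k) + 1, snd (p ! k) + 1)})"

definition warping_paths :: "nat \<Rightarrow> nat \<Rightarrow> (nat \<times> nat) list set" where
  "warping_paths m n = {p. is_warping_path m n p}"

definition path_cost :: "real list \<Rightarrow> real list \<Rightarrow> (nat \<times> nat) list \<Rightarrow> real" where
  "path_cost x y p = (\<Sum>(i, j)\<leftarrow>p. (x ! (i - 1) - y ! (j - 1))\<^sup>2)"

definition dtw :: "real list \<Rightarrow> real list \<Rightarrow> real" where
  "dtw x y = sqrt (Min (path_cost x y ` warping_paths (length x) (length y)))"

definition warp_ident :: "real list \<Rightarrow> real list \<Rightarrow> bool" where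
  "warp_ident x y \<longleftrightarrow> dtw x y = 0"

definition wclass :: "real list \<Rightarrow> real list set" where
  "wclass x = {y \<in> TS. warp_ident x y}"

definition TSstar :: "real list set set" where
  "TSstar = wclass ` TS"

definition twi_dist :: "real list set \<Rightarrow> real list set \<Rightarrow> real" where
  "twi_dist A B = (INF x'\<in>A. INF y'\<in>B. dtw x' y')"

definition expansion :: "real list \<Rightarrow> real list \<Rightarrow> bool" where
  "expansion x' x \<longleftrightarrow> (\<exists>\<alpha>::nat list. length \<alpha> = length x \<and> (\<forall>a\<in>set \<alpha>. a \<ge> 1) \<and>
      x' = concat (map (\<lambda>(v, a). replicate a v) (zip x \<alpha>)))"

definition irreducible_ts :: "real list \<Rightarrow> bool" where
  "irreducible_ts x \<longleftrightarrow> (\<forall>i. Suc i < length x \<longrightarrow> x ! i \<noteq> x ! Suc i)"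

definition condensed :: "real list \<Rightarrow> real list" where
  "condensed x = (THE z. irreducible_ts z \<and> expansion x z)"

definition semimetric_on :: "'a set \<Rightarrow> ('a \<Rightarrow> 'a \<Rightarrow> real) \<Rightarrow> bool" where
  "semimetric_on X d \<longleftrightarrow>
     (\<forall>a\<in>X. \<forall>b\<in>X. d a b \<ge> 0 \<and> (d a b = 0 \<longleftrightarrow> a = b) \<and> d a b = d b a)"

end

theory Submission
  imports Defs
begin


fun costs :: "real list \<Rightarrow> real list \<Rightarrow> real set" where
  "costs [] _ = {}"
| "costs _ [] = {}"
| "costs [a] [b] = {(a-b)\<^sup>2}"
| "costs (a#x) (b#y) = (\<lambda>c. (a-b)\<^sup>2 + c) ` (costs x y \<union> costs x (b#y) \<union> costs (a#x) y)"

lemma costs_cons: "x \<noteq> [] \<or> y \<noteq> [] \<Longrightarrow>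
  costs (a#x) (b#y) = (\<lambda>c. (a-b)\<^sup>2 + c) ` (costs x y \<union> costs x (b#y) \<union> costs (a#x) y)"
  by (cases x; cases y) auto

lemma costs_Nil2[simp]: "costs x [] = {}"
  by (cases x) auto

lemma costs_finite: "finite (costs x y)"
  by (induction x y rule: costs.induct) auto

lemma costs_nonneg: "c \<in> costs x y \<Longrightarrow> c \<ge> 0"
  by (induction x y arbitrary: c rule: costs.induct) (auto intro: add_nonneg_nonneg)

lemma costs_ne: "x \<noteq> [] \<Longrightarrow> y \<noteq> [] \<Longrightarrow> costs x y \<noteq> {}"
  by (induction x y rule: costs.induct) auto

lemma costs_sym: "costs x y = costs y x"
proof (induction x y rule: costs.induct)
  case ("4_1" a v va b y)
  then show ?case
    by (cases y) (auto simp: power2_commute)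
next
  case ("4_2" a x b v va)
  then show ?case
    by (cases x) (auto simp: power2_commute)
qed (auto simp: power2_commute)

definition st :: "nat \<times> nat \<Rightarrow> nat \<times> nat \<Rightarrow> bool" where
  "st u v \<longleftrightarrow> v \<in> {(fst u + 1, snd u), (fst u, snd u + 1), (fst u + 1, snd u + 1)}"

lemma wp_alt: "is_warping_path m n p \<longleftrightarrow>
   p \<noteq> [] \<and> hd p = (1, 1) \<and> last p = (m, n) \<and>
     (\<forall>q\<in>set p. fst q \<in> {1..m} \<and> snd q \<in> {1..n}) \<and> successively st p"
  unfolding is_warping_path_def successively_conv_nth st_def by simp

lemma succ_mono_hd: "successively st q \<Longrightarrow> r \<in> set q \<Longrightarrow> fst (hd q) \<le> fst r \<and> snd (hd q) \<le> snd r"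
proof (induction q rule: induct_list012)
  case (3 x y xs)
  then show ?case by (fastforce simp: st_def)
qed auto



definition shp :: "nat \<Rightarrow> nat \<Rightarrow> (nat\<times>nat) list \<Rightarrow> (nat\<times>nat) list" where
  "shp di dj p = (1,1) # map (\<lambda>(i,j). (i+di, j+dj)) p"

lemma wp_shift:
  assumes "is_warping_path m n p" "(di,dj) \<in> {(1,0),(0,1),(1,1)}"
  shows "is_warping_path (m+di) (n+dj) (shp di dj p)"
proof -
  have p: "p \<noteq> []" "hd p = (1,1)" "last p = (m,n)"
    "\<forall>q\<in>set p. fst q \<in> {1..m} \<and> snd q \<in> {1..n}" "successively st p"
    using assms(1) unfolding wp_alt by auto
  have "successively st (map (\<lambda>(i,j). (i+di, j+dj)) p)"
    unfolding successively_map using p(5)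
    by (rule successively_mono) (auto simp: st_def split: prod.splits)
  moreover have "st (1,1) (hd (map (\<lambda>(i,j). (i+di, j+dj)) p))"
    using p(1,2) assms(2) by (auto simp: st_def hd_map)
  ultimately have "successively st (shp di dj p)"
    unfolding shp_def using p(1) by (cases p) (auto simp: successively_Cons)
  moreover have "last (shp di dj p) = (m+di, n+dj)"
    using p(1,3) by (auto simp: shp_def last_map)
  moreover have "1 \<le> m" "1 \<le> n" using p(1,2,4) hd_in_set[of p] by force+
  moreover have "\<forall>q\<in>set (shp di dj p). fst q \<in> {1..m+di} \<and> snd q \<in> {1..n+dj}"
    using p(4) \<open>1 \<le> m\<close> \<open>1 \<le> n\<close> by (auto simp: shp_def)
  ultimately show ?thesis unfolding wp_alt by (simp add: shp_def)
qed

lemma wp_decomp: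
  assumes "is_warping_path m n p" "length p \<ge> 2"
  shows "\<exists>di dj p'. (di,dj) \<in> {(1,0),(0,1),(1,1)} \<and> p = shp di dj p' \<and>
            is_warping_path (m-di) (n-dj) p' \<and> di \<le> m \<and> dj \<le> n"
proof -
  have p: "p \<noteq> []" "hd p = (1,1)" "last p = (m,n)"
    "\<forall>q\<in>set p. fst q \<in> {1..m} \<and> snd q \<in> {1..n}" "successively st p"
    using assms(1) unfolding wp_alt by auto
  obtain u v rest where uv: "p = u # v # rest"
    using assms(2) by (cases p; cases "tl p") auto
  have u: "u = (1,1)" using p(2) uv by simp
  have suv: "st u v" and sv: "successively st (v#rest)" using p(5) uv by (auto simp: successively_Cons)
  obtain di dj where d: "(di,dj) \<in> {(1,0),(0,1),(1,1)}" and v: "v = (1+di, 1+dj)"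
    using suv u unfolding st_def by auto
  define p' where "p' = map (\<lambda>(i,j). (i-di, j-dj)) (v#rest)"
  have ge: "\<forall>r\<in>set (v#rest). fst r \<ge> 1+di \<and> snd r \<ge> 1+dj"
    using succ_mono_hd[OF sv] v by fastforce
  have hback: "map (\<lambda>(i,j). (i+di, j+dj)) p' = v#rest"
    unfolding p'_def map_map
    by (rule map_idI) (use ge in \<open>auto split: prod.splits\<close>)
  have "p = shp di dj p'" using hback uv u by (simp add: shp_def)
  moreover have "successively st p'"
    unfolding p'_def successively_map using sv
    by (rule successively_mono) (use ge in \<open>auto simp: st_def split: prod.splits\<close>)
  moreover have "hd p' = (1,1)" using v by (simp add: p'_def)
  moreover have "last p' = (m-di, n-dj)"
    using p(3) uv by (auto simp: p'_def last_map)
  moreover have "\<forall>q\<in>set p'. fst q \<in> {1..m-di} \<and> snd q \<in> {1..n-dj}"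
  proof
    fix q assume "q \<in> set p'"
    then have "q \<in> (\<lambda>r. (fst r - di, snd r - dj)) ` set (v#rest)"
      unfolding p'_def by (simp add: case_prod_unfold)
    then obtain r where r: "r \<in> set (v#rest)" "q = (fst r - di, snd r - dj)"
      by blast
    then have "r \<in> set p" using uv by auto
    then show "fst q \<in> {1..m-di} \<and> snd q \<in> {1..n-dj}"
      using p(4) ge r by force
  qed
  moreover have "di \<le> m" "dj \<le> n" using p(4) uv v d by auto
  moreover have "p' \<noteq> []" by (simp add: p'_def)
  ultimately show ?thesis using d
    by (intro exI[of _ di] exI[of _ dj] exI[of _ p']) (simp add: wp_alt)
qed

lemma cost_shift:
  assumes "\<forall>q\<in>set p. fst q \<ge> 1 \<and> snd q \<ge> 1" "di \<le> 1" "dj \<le> 1"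
  shows "path_cost (a#x) (b#y) (shp di dj p) =
     (a-b)\<^sup>2 + path_cost (if di = 1 then x else a#x) (if dj = 1 then y else b#y) p"
proof -
  have "\<And>i j. (i,j) \<in> set p \<Longrightarrow> ((a#x) ! (i+di-1) - (b#y) ! (j+dj-1))\<^sup>2 =
     ((if di = 1 then x else a#x) ! (i-1) - (if dj = 1 then y else b#y) ! (j-1))\<^sup>2"
  proof -
    fix i j assume "(i,j) \<in> set p"
    then have "i \<ge> 1" "j \<ge> 1" using assms(1) by auto
    moreover have "di = 0 \<or> di = 1" "dj = 0 \<or> dj = 1" using assms(2,3) by auto
    ultimately show "?thesis i j"
      by (elim disjE; auto simp: nth_Cons')
  qed
  then show ?thesis
    unfolding path_cost_def shp_def
    by (simp add: comp_def case_prod_unfold cong: map_cong)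
qed



lemma wp_ge1: "is_warping_path m n p \<Longrightarrow> \<forall>q\<in>set p. fst q \<ge> 1 \<and> snd q \<ge> 1"
  unfolding wp_alt by auto

lemma wp_mn: "is_warping_path m n p \<Longrightarrow> m \<ge> 1 \<and> n \<ge> 1"
  unfolding wp_alt using hd_in_set by force

lemma path_to_costs:
  "is_warping_path (length x) (length y) p \<Longrightarrow> path_cost x y p \<in> costs x y"
proof (induction "length p" arbitrary: p x y rule: less_induct)
  case less
  from wp_mn[OF less.prems] obtain a x' b y' where xy: "x = a#x'" "y = b#y'"
    by (cases x; cases y) auto
  show ?case
  proof (cases "length p \<ge> 2")
    case False
    then obtain u where p: "p = [u]" using less.prems unfolding wp_alt
      by (cases p; cases "tl p") auto
    then have "u = (1,1)" "u = (length x, length y)" using less.prems unfolding wp_alt by auto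
    then show ?thesis using p xy by (simp add: path_cost_def)
  next
    case True
    from wp_decomp[OF less.prems True] obtain di dj p' where
      d: "(di,dj) \<in> {(1,0),(0,1),(1,1)}" and p: "p = shp di dj p'"
      and w: "is_warping_path (length x - di) (length y - dj) p'"
      and le: "di \<le> length x" "dj \<le> length y" by blast
    define X where "X = (if di = 1 then x' else a#x')"
    define Y where "Y = (if dj = 1 then y' else b#y')"
    have lX: "length X = length x - di" and lY: "length Y = length y - dj"
      using d xy by (auto simp: X_def Y_def)
    have "path_cost X Y p' \<in> costs X Y"
      using less.hyps[of p' X Y] w lX lY p by (simp add: shp_def)
    moreover have "path_cost x y p = (a-b)\<^sup>2 + path_cost X Y p'"
      unfolding p xy X_def Y_def using d wp_ge1[OF w] by (intro cost_shift) auto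
    moreover have "x' \<noteq> [] \<or> y' \<noteq> []"
      using wp_mn[OF w] d xy by auto
    ultimately show ?thesis
      using d unfolding xy X_def Y_def by (auto simp: costs_cons)
  qed
qed

lemma costs_step:
  assumes "x \<noteq> [] \<or> y \<noteq> []" "c \<in> costs (a#x) (b#y)"
    "\<And>c. c \<in> costs x y \<Longrightarrow> \<exists>p. is_warping_path (length x) (length y) p \<and> path_cost x y p = c"
    "\<And>c. c \<in> costs x (b#y) \<Longrightarrow> \<exists>p. is_warping_path (length x) (length (b#y)) p \<and> path_cost x (b#y) p = c"
    "\<And>c. c \<in> costs (a#x) y \<Longrightarrow> \<exists>p. is_warping_path (length (a#x)) (length y) p \<and> path_cost (a#x) y p = c"
  shows "\<exists>p. is_warping_path (length (a#x)) (length (b#y)) p \<and> path_cost (a#x) (b#y) p = c"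
proof -
  obtain c' where c: "c = (a-b)\<^sup>2 + c'" and
    "c' \<in> costs x y \<or> c' \<in> costs x (b#y) \<or> c' \<in> costs (a#x) y"
    using assms(2) by (auto simp: costs_cons[OF assms(1)])
  then consider "c' \<in> costs x y" | "c' \<in> costs x (b#y)" | "c' \<in> costs (a#x) y" by blast
  then show ?thesis
  proof cases
    case 1
    then obtain p where p: "is_warping_path (length x) (length y) p" "path_cost x y p = c'"
      using assms(3) by blast
    show ?thesis
      using wp_shift[OF p(1), of 1 1] cost_shift[OF wp_ge1[OF p(1)], of 1 1 a x b y] p(2) c
      by (intro exI[of _ "shp 1 1 p"]) simp
  next
    case 2
    then obtain p where p: "is_warping_path (length x) (length (b#y)) p" "path_cost x (b#y) p = c'"
      using assms(4) by blast
    show ?thesis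
      using wp_shift[OF p(1), of 1 0] cost_shift[OF wp_ge1[OF p(1)], of 1 0 a x b y] p(2) c
      by (intro exI[of _ "shp 1 0 p"]) simp
  next
    case 3
    then obtain p where p: "is_warping_path (length (a#x)) (length y) p" "path_cost (a#x) y p = c'"
      using assms(5) by blast
    show ?thesis
      using wp_shift[OF p(1), of 0 1] cost_shift[OF wp_ge1[OF p(1)], of 0 1 a x b y] p(2) c
      by (intro exI[of _ "shp 0 1 p"]) simp
  qed
qed

lemma costs_to_path:
  "c \<in> costs x y \<Longrightarrow> \<exists>p. is_warping_path (length x) (length y) p \<and> path_cost x y p = c"
proof (induction x y arbitrary: c rule: costs.induct)
  case (3 a b)
  then show ?case
    by (intro exI[of _ "[(1,1)]"]) (simp add: wp_alt path_cost_def)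
next
  case ("4_1" a v va b y)
  show ?case by (rule costs_step) (use "4_1" in auto)
next
  case ("4_2" a x b v va)
  show ?case by (rule costs_step) (use "4_2" in auto)
qed auto

lemma costs_eq: "path_cost x y ` warping_paths (length x) (length y) = costs x y"
  using path_to_costs costs_to_path unfolding warping_paths_def by fastforce

lemma dtw_costs: "dtw x y = sqrt (Min (costs x y))"
  unfolding dtw_def costs_eq ..



definition domn :: "real list \<Rightarrow> real list \<Rightarrow> bool" where
  "domn x' x \<longleftrightarrow> (\<forall>y c. c \<in> costs x y \<longrightarrow> (\<exists>c'\<in>costs x' y. c' \<le> c))"

lemma dom_refl: "domn x x" unfolding domn_def by auto

lemma dom_trans: "domn x y \<Longrightarrow> domn y z \<Longrightarrow> domn x z"
  unfolding domn_def by (meson order_trans)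

lemma dom_dup: "domn (a#x) (a#a#x)"
  unfolding domn_def
proof (intro allI impI)
  fix y c assume "c \<in> costs (a#a#x) y"
  then show "\<exists>c'\<in>costs (a#x) y. c' \<le> c"
  proof (induction y arbitrary: c)
    case Nil then show ?case by simp
  next
    case (Cons b y)
    obtain c1 where c: "c = (a-b)\<^sup>2 + c1" and
      c1: "c1 \<in> costs (a#x) y \<or> c1 \<in> costs (a#x) (b#y) \<or> c1 \<in> costs (a#a#x) y"
      using Cons.prems by (auto simp: costs_cons)
    have nn: "c1 \<ge> 0" "(a-b)\<^sup>2 \<ge> 0" using c1 costs_nonneg by auto
    from c1 consider "c1 \<in> costs (a#x) y" | "c1 \<in> costs (a#x) (b#y)" | "c1 \<in> costs (a#a#x) y"
      by blast
    then show ?case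
    proof cases
      case 1
      then have "y \<noteq> []" by auto
      then show ?thesis using 1 c by (auto simp: costs_cons)
    next
      case 2 then show ?thesis using c nn by (intro bexI[of _ c1]) auto
    next
      case 3
      then have "y \<noteq> []" by auto
      from Cons.IH[OF 3] obtain c2 where "c2 \<in> costs (a#x) y" "c2 \<le> c1" by blast
      then show ?thesis using c \<open>y \<noteq> []\<close> by (force simp: costs_cons)
    qed
  qed
qed

lemma dom_cong:
  assumes "x \<noteq> []" "x' \<noteq> []" "domn x' x"
  shows "domn (a#x') (a#x)"
  unfolding domn_def
proof (intro allI impI)
  fix y c assume "c \<in> costs (a#x) y"
  then show "\<exists>c'\<in>costs (a#x') y. c' \<le> c"
  proof (induction y arbitrary: c)
    case Nil then show ?case by simp
  next
    case (Cons b y)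
    obtain c1 where c: "c = (a-b)\<^sup>2 + c1" and
      c1: "c1 \<in> costs x y \<or> c1 \<in> costs x (b#y) \<or> c1 \<in> costs (a#x) y"
      using Cons.prems assms(1) by (auto simp: costs_cons)
    have "\<exists>c2. c2 \<le> c1 \<and> (c2 \<in> costs x' y \<or> c2 \<in> costs x' (b#y) \<or> c2 \<in> costs (a#x') y)"
      using c1 Cons.IH assms(3) unfolding domn_def by blast
    then obtain c2 where "c2 \<le> c1" "c2 \<in> costs x' y \<or> c2 \<in> costs x' (b#y) \<or> c2 \<in> costs (a#x') y"
      by blast
    then show ?case using c assms(2) by (force simp: costs_cons)
  qed
qed

lemma dom_rem: "x \<noteq> [] \<Longrightarrow> domn (remdups_adj x) x"
proof (induction x rule: remdups_adj.induct)
  case 1 then show ?case by simp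
next
  case (2 x) then show ?case by (simp add: dom_refl)
next
  case (3 a b xs)
  show ?case
  proof (cases "a = b")
    case True
    then show ?thesis using 3 dom_dup[of a xs] dom_trans by simp
  next
    case False
    then show ?thesis using 3 dom_cong[of "b#xs" "remdups_adj (b#xs)" a] by simp
  qed
qed

lemma Min_dom:
  assumes "domn x' x" "x \<noteq> []" "y \<noteq> []" "x' \<noteq> []"
  shows "Min (costs x' y) \<le> Min (costs x y)"
proof -
  have "Min (costs x y) \<in> costs x y" using costs_finite costs_ne assms by auto
  then obtain c' where "c' \<in> costs x' y" "c' \<le> Min (costs x y)" using assms(1) unfolding domn_def by blast
  then show ?thesis using costs_finite Min_le order_trans by blast
qed

lemma dtw_rem_le: "x \<noteq> [] \<Longrightarrow> y \<noteq> [] \<Longrightarrow> dtw (remdups_adj x) y \<le> dtw x y"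
  unfolding dtw_costs using Min_dom[OF dom_rem] by simp

lemma dtw_sym: "dtw x y = dtw y x"
  unfolding dtw_costs using costs_sym by simp

lemma dtw_nonneg: "x \<noteq> [] \<Longrightarrow> y \<noteq> [] \<Longrightarrow> dtw x y \<ge> 0"
  unfolding dtw_costs using costs_finite costs_ne costs_nonneg Min_in by (metis real_sqrt_ge_zero)

lemma dtw_zero_iff: "x \<noteq> [] \<Longrightarrow> y \<noteq> [] \<Longrightarrow> dtw x y = 0 \<longleftrightarrow> 0 \<in> costs x y"
proof -
  assume ne: "x \<noteq> []" "y \<noteq> []"
  have m: "Min (costs x y) \<in> costs x y" using costs_finite costs_ne ne by auto
  have "dtw x y = 0 \<longleftrightarrow> Min (costs x y) = 0" unfolding dtw_costs by simp
  also have "\<dots> \<longleftrightarrow> 0 \<in> costs x y"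
    using m costs_finite costs_nonneg Min_le by (metis antisym)
  finally show ?thesis .
qed

lemma zero_costs:
  "x \<noteq> [] \<Longrightarrow> y \<noteq> [] \<Longrightarrow> remdups_adj x = remdups_adj y \<Longrightarrow> 0 \<in> costs x y"
proof (induction "length x + length y" arbitrary: x y rule: less_induct)
  case less
  obtain a x' b y' where xy: "x = a#x'" "y = b#y'" using less.prems by (cases x; cases y) auto
  have ab: "a = b" using arg_cong[OF less.prems(3), of hd] xy by simp
  show ?case
  proof (cases "x' \<noteq> [] \<and> hd x' = a")
    case True
    then obtain x'' where "x' = a # x''" by (cases x') auto
    then have "remdups_adj x' = remdups_adj y" using less.prems(3) xy by simp
    then have "0 \<in> costs x' y" using less.hyps[of x' y] True xy by simp
    then show ?thesis using xy ab True by (auto simp: costs_cons)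
  next
    case F1: False
    show ?thesis
    proof (cases "y' \<noteq> [] \<and> hd y' = b")
      case True
      then obtain y'' where "y' = b # y''" by (cases y') auto
      then have "remdups_adj x = remdups_adj y'" using less.prems(3) xy by simp
      then have "0 \<in> costs x y'" using less.hyps[of x y'] True xy by simp
      then show ?thesis using xy ab True by (auto simp: costs_cons)
    next
      case F2: False
      have rx: "remdups_adj x = a # remdups_adj x'"
        using F1 xy by (cases x') auto
      have ry: "remdups_adj y = b # remdups_adj y'"
        using F2 xy by (cases y') auto
      have r: "remdups_adj x' = remdups_adj y'" using rx ry less.prems(3) by simp
      show ?thesis
      proof (cases "x' = []")
        case True
        then have "y' = []" using r by (metis remdups_adj_Nil_iff)
        then show ?thesis using True xy ab by simp
      next
        case False
        then have "y' \<noteq> []" using r by auto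
        then have "0 \<in> costs x' y'" using less.hyps[of x' y'] False xy r by simp
        then show ?thesis using xy ab False by (force simp: costs_cons)
      qed
    qed
  qed
qed

lemma zero_step:
  assumes "x \<noteq> [] \<or> y \<noteq> []" "0 \<in> costs (a#x) (b#y)"
    "distinct_adj (a#x)" "distinct_adj (b#y)"
    "0 \<in> costs x y \<Longrightarrow> distinct_adj x \<Longrightarrow> distinct_adj y \<Longrightarrow> x = y"
    "0 \<in> costs x (b#y) \<Longrightarrow> distinct_adj x \<Longrightarrow> distinct_adj (b#y) \<Longrightarrow> x = b#y"
    "0 \<in> costs (a#x) y \<Longrightarrow> distinct_adj (a#x) \<Longrightarrow> distinct_adj y \<Longrightarrow> a#x = y"
  shows "a#x = b#y"
proof -
  obtain c where c: "0 = (a-b)\<^sup>2 + c" and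
    c1: "c \<in> costs x y \<or> c \<in> costs x (b#y) \<or> c \<in> costs (a#x) y"
    using assms(2) by (auto simp: costs_cons[OF assms(1)])
  have "c \<ge> 0" using c1 costs_nonneg by blast
  then have "a = b" "c = 0" using c by (auto simp: add_nonneg_eq_0_iff)
  have dx: "distinct_adj x" "distinct_adj y"
    using distinct_adj_ConsD[OF assms(3)] distinct_adj_ConsD[OF assms(4)] by auto
  from c1 consider "0 \<in> costs x y" | "0 \<in> costs x (b#y)" | "0 \<in> costs (a#x) y"
    using \<open>c = 0\<close> by blast
  then show ?thesis
  proof cases
    case 1 then show ?thesis using assms(5) dx \<open>a = b\<close> by simp
  next
    case 2 then have "x = b#y" using assms(6,4) dx by simp
    then show ?thesis using assms(3) \<open>a = b\<close> by (simp add: distinct_adj_Cons)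
  next
    case 3 then have "a#x = y" using assms(7,3) dx by simp
    then show ?thesis using assms(4) \<open>a = b\<close> by (auto simp: distinct_adj_Cons)
  qed
qed

lemma zero_irred:
  "0 \<in> costs x y \<Longrightarrow> distinct_adj x \<Longrightarrow> distinct_adj y \<Longrightarrow> x = y"
proof (induction x y rule: costs.induct)
  case ("4_1" a v va b y)
  show ?case by (rule zero_step) (use "4_1" in auto)
next
  case ("4_2" a x b v va)
  show ?case by (rule zero_step) (use "4_2" in auto)
qed auto



lemma irred_iff: "irreducible_ts x \<longleftrightarrow> distinct_adj x"
  unfolding irreducible_ts_def distinct_adj_conv_nth ..

definition ex :: "real list \<Rightarrow> nat list \<Rightarrow> real list" where
  "ex z \<alpha> = concat (map (\<lambda>(v, a). replicate a v) (zip z \<alpha>))"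

lemma rem_rep: "k \<ge> 1 \<Longrightarrow> remdups_adj (replicate k v @ r) = remdups_adj (v # r)"
proof (induction k)
  case 0 then show ?case by simp
next
  case (Suc k)
  then show ?case by (cases k) simp_all
qed

lemma rem_ex: "length \<alpha> = length z \<Longrightarrow> \<forall>a\<in>set \<alpha>. a \<ge> 1 \<Longrightarrow> remdups_adj (ex z \<alpha>) = remdups_adj z"
proof (induction z arbitrary: \<alpha>)
  case Nil then show ?case by (simp add: ex_def)
next
  case (Cons v z)
  then obtain k \<alpha>' where a: "\<alpha> = k # \<alpha>'" by (cases \<alpha>) auto
  have "ex (v#z) \<alpha> = replicate k v @ ex z \<alpha>'" by (simp add: a ex_def)
  then have "remdups_adj (ex (v#z) \<alpha>) = remdups_adj (v # ex z \<alpha>')"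
    using rem_rep[of k v "ex z \<alpha>'"] Cons.prems a by simp
  also have "\<dots> = remdups_adj (v # z)"
    using Cons.IH[of \<alpha>'] Cons.prems a by (simp add: remdups_adj_Cons)
  finally show ?case .
qed

lemma exp_cons1: "expansion x z \<Longrightarrow> expansion (a#x) (a#z)"
proof -
  assume "expansion x z"
  then obtain \<alpha> where a: "length \<alpha> = length z" "\<forall>a\<in>set \<alpha>. a \<ge> 1"
    "x = concat (map (\<lambda>(v, a). replicate a v) (zip z \<alpha>))"
    unfolding expansion_def by blast
  then show ?thesis unfolding expansion_def
    by (intro exI[of _ "Suc 0 # \<alpha>"]) auto
qed

lemma exp_cons2: "expansion x (b#z) \<Longrightarrow> expansion (b#x) (b#z)"
proof -
  assume "expansion x (b#z)"
  then obtain \<alpha> where a: "length \<alpha> = length (b#z)" "\<forall>a\<in>set \<alpha>. a \<ge> 1"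
    "x = concat (map (\<lambda>(v, a). replicate a v) (zip (b#z) \<alpha>))"
    unfolding expansion_def by blast
  then obtain k \<alpha>' where "\<alpha> = k # \<alpha>'" by (cases \<alpha>) auto
  then show ?thesis using a unfolding expansion_def
    by (intro exI[of _ "Suc k # \<alpha>'"]) auto
qed

lemma exp_rem: "expansion x (remdups_adj x)"
proof (induction x)
  case Nil then show ?case by (simp add: expansion_def)
next
  case (Cons a x)
  show ?case
  proof (cases "remdups_adj x")
    case Nil
    then have "x = []" by simp
    then show ?thesis using exp_cons1[of "[]" "[]" a] by (simp add: expansion_def)
  next
    case (Cons y ys)
    then show ?thesis
      using exp_cons1[OF Cons.IH, of a] exp_cons2[of x y ys] Cons.IH
      by (auto simp: remdups_adj_Cons)
  qed
qed

lemma condensed_eq: "condensed x = remdups_adj x"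
  unfolding condensed_def
proof (rule the_equality)
  show "irreducible_ts (remdups_adj x) \<and> expansion x (remdups_adj x)"
    by (simp add: irred_iff exp_rem)
next
  fix z assume z: "irreducible_ts z \<and> expansion x z"
  then obtain \<alpha> where a: "length \<alpha> = length z" "\<forall>a\<in>set \<alpha>. a \<ge> 1"
    "x = concat (map (\<lambda>(v, a). replicate a v) (zip z \<alpha>))"
    unfolding expansion_def by blast
  have "x = ex z \<alpha>" using a(3) by (simp add: ex_def)
  then have "remdups_adj x = remdups_adj z" using rem_ex a by simp
  also have "\<dots> = z" using z irred_iff distinct_adj_altdef by blast
  finally show "z = remdups_adj x" by simp
qed

lemma rr: "remdups_adj (remdups_adj x) = remdups_adj x"
  using distinct_adj_altdef distinct_adj_remdups_adj by blast

lemma key_le: "x \<noteq> [] \<Longrightarrow> y \<noteq> [] \<Longrightarrow> dtw (remdups_adj x) (remdups_adj y) \<le> dtw x y"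
proof -
  assume ne: "x \<noteq> []" "y \<noteq> []"
  have "dtw (remdups_adj x) (remdups_adj y) = dtw (remdups_adj y) (remdups_adj x)" by (rule dtw_sym)
  also have "\<dots> \<le> dtw y (remdups_adj x)" using dtw_rem_le ne by simp
  also have "\<dots> = dtw (remdups_adj x) y" by (rule dtw_sym)
  also have "\<dots> \<le> dtw x y" using dtw_rem_le ne by simp
  finally show ?thesis .
qed

lemma W1: "x \<noteq> [] \<Longrightarrow> y \<noteq> [] \<Longrightarrow> dtw x y = 0 \<longleftrightarrow> remdups_adj x = remdups_adj y"
proof
  assume ne: "x \<noteq> []" "y \<noteq> []" and d: "dtw x y = 0"
  have ne': "remdups_adj x \<noteq> []" "remdups_adj y \<noteq> []" using ne by auto
  have "dtw (remdups_adj x) (remdups_adj y) = 0"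
    using key_le[OF ne] d dtw_nonneg[OF ne'] by simp
  then have "0 \<in> costs (remdups_adj x) (remdups_adj y)" using dtw_zero_iff ne' by blast
  then show "remdups_adj x = remdups_adj y" using zero_irred by simp
next
  assume ne: "x \<noteq> []" "y \<noteq> []" and "remdups_adj x = remdups_adj y"
  then show "dtw x y = 0" using zero_costs dtw_zero_iff by blast
qed

lemma wclass_eq: "x \<in> TS \<Longrightarrow> wclass x = {y \<in> TS. remdups_adj y = remdups_adj x}"
  unfolding wclass_def warp_ident_def TS_def using W1 by auto

lemma twi_eq:
  assumes "x \<in> TS" "y \<in> TS"
  shows "twi_dist (wclass x) (wclass y) = dtw (remdups_adj x) (remdups_adj y)"
proof -
  have inner: "(INF y'\<in>wclass y. dtw x' y') = dtw x' (remdups_adj y)" if "x' \<in> TS" for x'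
  proof (rule cInf_eq_minimum)
    show "dtw x' (remdups_adj y) \<in> (\<lambda>y'. dtw x' y') ` wclass y"
      using assms wclass_eq[of y] by (auto simp: rr TS_def)
  next
    fix z assume "z \<in> (\<lambda>y'. dtw x' y') ` wclass y"
    then obtain y' where y': "y' \<in> TS" "remdups_adj y' = remdups_adj y" "z = dtw x' y'"
      using wclass_eq[OF assms(2)] by auto
    have "dtw x' (remdups_adj y) = dtw (remdups_adj y') x'" using y' dtw_sym by simp
    also have "\<dots> \<le> dtw y' x'" using dtw_rem_le[of y' x'] y' that by (simp add: TS_def)
    finally show "dtw x' (remdups_adj y) \<le> z" using y' dtw_sym by simp
  qed
  have "twi_dist (wclass x) (wclass y) = (INF x'\<in>wclass x. dtw x' (remdups_adj y))"
    unfolding twi_dist_def using inner wclass_eq[OF assms(1)] by (intro INF_cong) auto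
  also have "\<dots> = dtw (remdups_adj x) (remdups_adj y)"
  proof (rule cInf_eq_minimum)
    show "dtw (remdups_adj x) (remdups_adj y) \<in> (\<lambda>x'. dtw x' (remdups_adj y)) ` wclass x"
      using assms wclass_eq[of x] by (auto simp: rr TS_def)
  next
    fix z assume "z \<in> (\<lambda>x'. dtw x' (remdups_adj y)) ` wclass x"
    then obtain x' where x': "x' \<in> TS" "remdups_adj x' = remdups_adj x" "z = dtw x' (remdups_adj y)"
      using wclass_eq[OF assms(1)] by auto
    show "dtw (remdups_adj x) (remdups_adj y) \<le> z"
      using dtw_rem_le[of x' "remdups_adj y"] x' assms by (simp add: TS_def)
  qed
  finally show ?thesis .
qed

theorem theorem1:
  shows "semimetric_on TSstar twi_dist \<and>
         (\<forall>x\<in>TS. \<forall>y\<in>TS. twi_dist (wclass x) (wclass y) = dtw (condensed x) (condensed y))"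
proof
  show "\<forall>x\<in>TS. \<forall>y\<in>TS. twi_dist (wclass x) (wclass y) = dtw (condensed x) (condensed y)"
    using twi_eq by (simp add: condensed_eq)
next
  show "semimetric_on TSstar twi_dist"
    unfolding semimetric_on_def TSstar_def
  proof (intro ballI, elim imageE)
    fix A B x y assume x: "x \<in> TS" "A = wclass x" and y: "y \<in> TS" "B = wclass y"
    have ne: "remdups_adj x \<noteq> []" "remdups_adj y \<noteq> []" using x y by (auto simp: TS_def)
    have t: "twi_dist A B = dtw (remdups_adj x) (remdups_adj y)"
      "twi_dist B A = dtw (remdups_adj y) (remdups_adj x)" using twi_eq x y by auto
    have "A = B \<longleftrightarrow> remdups_adj x = remdups_adj y"
    proof
      assume "A = B"
      then have "x \<in> wclass y" using x y wclass_eq by auto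
      then show "remdups_adj x = remdups_adj y" using wclass_eq y by auto
    next
      assume "remdups_adj x = remdups_adj y"
      then show "A = B" using x y wclass_eq by auto
    qed
    moreover have "dtw (remdups_adj x) (remdups_adj y) = 0 \<longleftrightarrow> remdups_adj x = remdups_adj y"
      using W1[OF ne] by (simp add: rr)
    ultimately show "0 \<le> twi_dist A B \<and> (twi_dist A B = 0 \<longleftrightarrow> A = B) \<and> twi_dist A B = twi_dist B A"
      using t dtw_nonneg[OF ne] dtw_sym by auto
  qed
qed


end
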